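(* Let $i\ge 2$ and let $c_0,\dots,c_{i-1}$ be the vertices of a cycle, each with a positive weight $w(c_j)$. Run the following procedure (BalanceInCycle): initialize $b_{OPT}\gets 0$, a queue $Q_1$ empty and a queue $Q_2$ containing $c_0,c_1,\dots,c_{i-1}$ in this order (head $c_0$). Repeat the following iteration until $c_0$ becomes the head of $Q_1$ for the second time: update $b_{OPT}\gets\max\{b_{OPT},\min(w(Q_1),w(Q_2))\}$; then, if $w(Q_1)>w(Q_2)$, dequeue the head of $Q_1$ and append it to the tail of $Q_2$, otherwise dequeue the head of $Q_2$ and append it to the tail of $Q_1$. Then this procedure terminates after $O(i)$ steps.
   Context: $w(Q)$ denotes the sum of the weights of the elements currently in queue $Q$. Queues are FIFO: elements are appended at the tail and removed at the head. (In the paper's application, the $c_j$ are the vertices of a cycle in the cactus representation of all minimum cuts of a graph, and $w(c_j)$ is the number of original graph vertices in the sub-cactus hanging off $c_j$.) *)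

theory Defs
  imports Complex_Main
begin

text \<open>Cycle vertices c_0..c_(i-1) are represented by the naturals 0..i-1; weights by w :: nat => real.
A state of BalanceInCycle is (Q1, Q2, b_OPT); queues are lists with the head at the front.\<close>

type_synonym bic_state = "nat list \<times> nat list \<times> real"

definition wq :: "(nat \<Rightarrow> real) \<Rightarrow> nat list \<Rightarrow> real" where
  "wq w Q = sum_list (map w Q)"

definition bic_step :: "(nat \<Rightarrow> real) \<Rightarrow> bic_state \<Rightarrow> bic_state" where
  "bic_step w s = (case s of (Q1, Q2, b) \<Rightarrow>
     (let b' = max b (min (wq w Q1) (wq w Q2)) in
      if wq w Q1 > wq w Q2 then (tl Q1, Q2 @ [hd Q1], b')
      else (Q1 @ [hd Q2], tl Q2, b')))"

definition bic_init :: "nat \<Rightarrow> bic_state" where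
  "bic_init i = ([], [0..<i], 0)"

definition bic_run :: "(nat \<Rightarrow> real) \<Rightarrow> nat \<Rightarrow> nat \<Rightarrow> bic_state" where
  "bic_run w i t = (bic_step w ^^ t) (bic_init i)"

definition head_Q1 :: "bic_state \<Rightarrow> nat option" where
  "head_Q1 s = (if fst s = [] then None else Some (hd (fst s)))"

definition becomes_head :: "(nat \<Rightarrow> real) \<Rightarrow> nat \<Rightarrow> nat \<Rightarrow> bool" where
  "becomes_head w i t \<longleftrightarrow> head_Q1 (bic_run w i t) = Some 0 \<and>
     (t = 0 \<or> head_Q1 (bic_run w i (t - 1)) \<noteq> Some 0)"

definition head_count :: "(nat \<Rightarrow> real) \<Rightarrow> nat \<Rightarrow> nat \<Rightarrow> nat" where
  "head_count w i t = card {s. s \<le> t \<and> becomes_head w i s}"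

definition bic_terminated_by :: "(nat \<Rightarrow> real) \<Rightarrow> nat \<Rightarrow> nat \<Rightarrow> bool" where
  "bic_terminated_by w i t \<longleftrightarrow> head_count w i t \<ge> 2"

end

theory Submission
  imports Defs
begin

definition WW :: "(nat \<Rightarrow> real) \<Rightarrow> nat \<Rightarrow> nat \<Rightarrow> nat \<Rightarrow> real" where
  "WW w i a b = wq w (map (\<lambda>k. k mod i) [a..<b])"

primrec ab :: "(nat \<Rightarrow> real) \<Rightarrow> nat \<Rightarrow> nat \<Rightarrow> nat \<times> nat" where
  "ab w i 0 = (0,0)"
| "ab w i (Suc t) = (case ab w i t of (s,e) \<Rightarrow>
     if WW w i s e > WW w i e (s+i) then (s+1,e) else (s,e+1))"

lemma run_Suc: "bic_run w i (Suc t) = bic_step w (bic_run w i t)"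
  by (simp add: bic_run_def)

lemma WW_nonneg:
  assumes "i > 0" "\<forall>j<i. w j > 0"
  shows "WW w i a b \<ge> 0"
  unfolding WW_def wq_def using assms
  by (intro sum_list_nonneg) (auto intro: less_imp_le)

lemma WW_pos:
  assumes "i > 0" "\<forall>j<i. w j > 0" "a < b"
  shows "WW w i a b > 0"
proof -
  have "[a..<b] = a # [Suc a..<b]" using assms(3) upt_conv_Cons by blast
  hence "WW w i a b = w (a mod i) + WW w i (Suc a) b" by (simp add: WW_def wq_def)
  moreover have "w (a mod i) > 0" using assms by simp
  ultimately show ?thesis using WW_nonneg[OF assms(1,2)] by (metis add_pos_nonneg)
qed

lemma inv:
  assumes "i > 0" "\<forall>j<i. w j > 0"
  shows "fst (ab w i t) \<le> snd (ab w i t) \<and> snd (ab w i t) \<le> fst (ab w i t) + i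
    \<and> fst (ab w i t) + snd (ab w i t) = t
    \<and> fst (bic_run w i t) = map (\<lambda>k. k mod i) [fst (ab w i t)..<snd (ab w i t)]
    \<and> fst (snd (bic_run w i t)) = map (\<lambda>k. k mod i) [snd (ab w i t)..<fst (ab w i t) + i]"
proof (induction t)
  case 0
  then show ?case by (simp add: bic_run_def bic_init_def, rule map_idI[symmetric], simp)
next
  case (Suc t)
  obtain s e where se: "ab w i t = (s,e)" by force
  obtain Q1 Q2 b where qb: "bic_run w i t = (Q1,Q2,b)" by (metis prod_cases3)
  define f where "f = (\<lambda>k::nat. k mod i)"
  have IH: "s \<le> e" "e \<le> s + i" "s + e = t" "Q1 = map f [s..<e]" "Q2 = map f [e..<s+i]"
    using Suc.IH se qb by (auto simp: f_def)
  have wq1: "wq w Q1 = WW w i s e" and wq2: "wq w Q2 = WW w i e (s+i)"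
    using IH by (auto simp: WW_def f_def)
  show ?case
  proof (cases "WW w i s e > WW w i e (s+i)")
    case True
    have "s < e"
    proof (rule ccontr)
      assume "\<not> s < e" hence "s = e" using IH by simp
      thus False using True WW_nonneg[OF assms, of e "s+i"] by (simp add: WW_def wq_def)
    qed
    have l1: "[s..<e] = s # [Suc s..<e]" using \<open>s<e\<close> upt_conv_Cons by blast
    have l2: "[e..<Suc (s+i)] = [e..<s+i] @ [s+i]" using IH(2) by simp
    have fs: "f (s+i) = f s" by (simp add: f_def)
    have r: "fst (bic_run w i (Suc t)) = tl Q1 \<and> fst (snd (bic_run w i (Suc t))) = Q2 @ [hd Q1]"
      using True qb wq1 wq2 by (simp add: run_Suc bic_step_def Let_def)
    have a: "ab w i (Suc t) = (s+1, e)" using True se by simp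
    show ?thesis unfolding a using r IH(1-3) \<open>s<e\<close> unfolding IH(4,5) l1 
      using l2 fs by (simp add: f_def)
  next
    case False
    have "e < s + i"
    proof (rule ccontr)
      assume "\<not> e < s + i" hence "e = s + i" using IH by simp
      hence "s < e" using assms(1) by simp
      thus False using False WW_pos[OF assms \<open>s<e\<close>] \<open>e = s+i\<close> by (simp add: WW_def wq_def)
    qed
    have l1: "[e..<s+i] = e # [Suc e..<s+i]" using \<open>e<s+i\<close> upt_conv_Cons by blast
    have l2: "[s..<Suc e] = [s..<e] @ [e]" using IH(1) by simp
    have r: "fst (bic_run w i (Suc t)) = Q1 @ [hd Q2] \<and> fst (snd (bic_run w i (Suc t))) = tl Q2"
      using False qb wq1 wq2 by (simp add: run_Suc bic_step_def Let_def)
    have a: "ab w i (Suc t) = (s, e+1)" using False se by simp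
    show ?thesis unfolding a using r IH(1-3) \<open>e<s+i\<close> unfolding IH(4,5) l1 
      using l2 by (simp add: f_def)
  qed
qed

lemma headQ1:
  assumes "i > 0" "\<forall>j<i. w j > 0"
  shows "head_Q1 (bic_run w i t) = (if fst (ab w i t) < snd (ab w i t) then Some (fst (ab w i t) mod i) else None)"
  using inv[OF assms, of t] by (auto simp: head_Q1_def hd_map)

lemma ab_step:
  assumes "i > 0" "\<forall>j<i. w j > 0"
  shows "(fst (ab w i (Suc t)) = fst (ab w i t) \<and> snd (ab w i (Suc t)) = Suc (snd (ab w i t)))
     \<or> (fst (ab w i (Suc t)) = Suc (fst (ab w i t)) \<and> snd (ab w i (Suc t)) = snd (ab w i t)
          \<and> fst (ab w i t) < snd (ab w i t))"
proof -
  obtain s e where se: "ab w i t = (s,e)" by force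
  have "ab w i (Suc t) = (s+1,e) \<or> ab w i (Suc t) = (s,e+1)" using se by auto
  thus ?thesis using inv[OF assms, of "Suc t"] se by auto
qed

theorem lemma3:
  shows "\<exists>C::nat. \<forall>i::nat. \<forall>w::nat \<Rightarrow> real.
           i \<ge> 2 \<longrightarrow> (\<forall>j<i. w j > 0) \<longrightarrow> (\<exists>t \<le> C * i. bic_terminated_by w i t)"
proof (rule exI[of _ 4], intro allI impI)
  fix i :: nat and w :: "nat \<Rightarrow> real"
  assume i2: "2 \<le> i" and wp: "\<forall>j<i. w j > 0"
  have i0: "i > 0" using i2 by simp
  define S where "S t = fst (ab w i t)" for t
  define E where "E t = snd (ab w i t)" for t
  have I: "S t \<le> E t \<and> E t \<le> S t + i \<and> S t + E t = t" for t
    using inv[OF i0 wp, of t] by (simp add: S_def E_def)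
  have H: "head_Q1 (bic_run w i t) = (if S t < E t then Some (S t mod i) else None)" for t
    using headQ1[OF i0 wp] by (simp add: S_def E_def)
  have St: "(S (Suc t) = S t \<and> E (Suc t) = Suc (E t)) \<or> (S (Suc t) = Suc (S t) \<and> E (Suc t) = E t \<and> S t < E t)" for t
    using ab_step[OF i0 wp, of t] by (simp add: S_def E_def)
  define P where "P t = (i \<le> S t \<and> (S t < E t \<or> i < S t))" for t
  have PT: "P (3*i+1)" using I[of "3*i+1"] unfolding P_def by linarith
  define ts where "ts = (LEAST t. P t)"
  have Pts: "P ts" using PT unfolding ts_def by (rule LeastI)
  have tsle: "ts \<le> 3*i+1" using PT unfolding ts_def by (rule Least_le)
  have "\<not> P 0" using I[of 0] i0 by (simp add: P_def)
  hence "ts \<noteq> 0" using Pts by (metis)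
  then obtain u where u: "ts = Suc u" by (cases ts) auto
  have nPu: "\<not> P u" using u not_less_Least[of u P] unfolding ts_def by simp
  have Sts: "S ts = i \<and> S ts < E ts"
    using St[of u] Pts nPu unfolding u P_def by auto
  have b1: "becomes_head w i 1"
  proof -
    have "S 1 = 0" "E 1 = 1" using I[of 1] by auto
    moreover have "S 0 = 0" "E 0 = 0" using I[of 0] by auto
    ultimately show ?thesis unfolding becomes_head_def using H[of 1] H[of 0] by simp
  qed
  have bts: "becomes_head w i ts"
  proof -
    have "head_Q1 (bic_run w i ts) = Some 0" using H[of ts] Sts by simp
    moreover have "head_Q1 (bic_run w i u) \<noteq> Some 0"
    proof (cases "S ts = S u")
      case True
      hence "\<not> S u < E u" using nPu Sts unfolding P_def by auto
      thus ?thesis using H[of u] by simp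
    next
      case False
      hence "S u = i - 1" using St[of u] nPu Sts unfolding u P_def by auto
      hence "S u mod i = i - 1" using i0 by simp
      thus ?thesis using H[of u] i2 by simp
    qed
    ultimately show ?thesis unfolding becomes_head_def u by simp
  qed
  have ts1: "ts \<noteq> 1" using Sts I[of ts] i2 by auto
  have "{1, ts} \<subseteq> {s. s \<le> 4*i \<and> becomes_head w i s}" using b1 bts tsle i2 by auto
  moreover have "finite {s. s \<le> 4*i \<and> becomes_head w i s}" by simp
  ultimately have "card {1, ts} \<le> head_count w i (4*i)"
    unfolding head_count_def by (metis card_mono)
  hence "bic_terminated_by w i (4*i)" using ts1 by (simp add: bic_terminated_by_def)
  thus "\<exists>t \<le> 4 * i. bic_terminated_by w i t" by blast
qed

end
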